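(* For every $i\in\{1,\dots,n-1\}$ one has in $SB_n^+$ $$\sigma_i\Delta\doteq\Delta\,\sigma_{n-i},\qquad x_i\Delta\doteq \Delta\, x_{n-i},$$ i.e. $\sigma_i\Delta\doteq\Delta\mathcal R(\sigma_i)$ and $x_i\Delta\doteq\Delta\mathcal R(x_i)$.
   Context: Fix $n\ge 2$. The positive singular braid monoid $SB_n^+$ is the monoid with generators $\sigma_1,\dots,\sigma_{n-1},x_1,\dots,x_{n-1}$ and relations: $\sigma_i\sigma_j=\sigma_j\sigma_i$ and $x_ix_j=x_jx_i$ if $|i-j|>1$; $x_i\sigma_j=\sigma_jx_i$ if $|i-j|\ne 1$; $\sigma_i\sigma_{i+1}\sigma_i=\sigma_{i+1}\sigma_i\sigma_{i+1}$; $\sigma_i\sigma_{i+1}x_i=x_{i+1}\sigma_i\sigma_{i+1}$; $\sigma_{i+1}\sigma_ix_{i+1}=x_i\sigma_{i+1}\sigma_i$. For positive words (words in $\sigma_i,x_i$), $A\doteq B$ means they represent the same element of $SB_n^+$. Garside's fundamental word is $\Delta\equiv\Pi_{n-1}\Pi_{n-2}\cdots\Pi_1$ where $\Pi_t\equiv\sigma_1\sigma_2\cdots\sigma_t$, i.e. $\Delta\equiv\sigma_1\cdots\sigma_{n-1}\sigma_1\cdots\sigma_{n-2}\cdots\sigma_1\sigma_2\sigma_1$. $\mathcal R$ is the letter substitution $\sigma_i\mapsto\sigma_{n-i}$, $x_i\mapsto x_{n-i}$. *)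

theory Defs
  imports Main
begin

text \<open>Letters of positive singular braid words: Sig i is sigma_i, X i is x_i.\<close>
datatype letter = Sig nat | X nat

type_synonym word = "letter list"

inductive sb_rel :: "nat \<Rightarrow> word \<Rightarrow> word \<Rightarrow> bool" for n :: nat where
  ss_comm: "\<lbrakk>1 \<le> i; i \<le> n - 1; 1 \<le> j; j \<le> n - 1; i + 1 < j \<or> j + 1 < i\<rbrakk>
     \<Longrightarrow> sb_rel n [Sig i, Sig j] [Sig j, Sig i]"
| xx_comm: "\<lbrakk>1 \<le> i; i \<le> n - 1; 1 \<le> j; j \<le> n - 1; i + 1 < j \<or> j + 1 < i\<rbrakk>
     \<Longrightarrow> sb_rel n [X i, X j] [X j, X i]"
| xs_comm: "\<lbrakk>1 \<le> i; i \<le> n - 1; 1 \<le> j; j \<le> n - 1; i \<noteq> j + 1; j \<noteq> i + 1\<rbrakk>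
     \<Longrightarrow> sb_rel n [X i, Sig j] [Sig j, X i]"
| braid: "\<lbrakk>1 \<le> i; i + 1 \<le> n - 1\<rbrakk>
     \<Longrightarrow> sb_rel n [Sig i, Sig (i+1), Sig i] [Sig (i+1), Sig i, Sig (i+1)]"
| mix1: "\<lbrakk>1 \<le> i; i + 1 \<le> n - 1\<rbrakk>
     \<Longrightarrow> sb_rel n [Sig i, Sig (i+1), X i] [X (i+1), Sig i, Sig (i+1)]"
| mix2: "\<lbrakk>1 \<le> i; i + 1 \<le> n - 1\<rbrakk>
     \<Longrightarrow> sb_rel n [Sig (i+1), Sig i, X (i+1)] [X i, Sig (i+1), Sig i]"

text \<open>A \<doteq> B in SB_n^+: the monoid congruence generated by the relations.\<close>
inductive sb_eq :: "nat \<Rightarrow> word \<Rightarrow> word \<Rightarrow> bool" for n :: nat where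
  sb_refl: "sb_eq n w w"
| sb_sym: "sb_eq n u v \<Longrightarrow> sb_eq n v u"
| sb_trans: "sb_eq n u v \<Longrightarrow> sb_eq n v w \<Longrightarrow> sb_eq n u w"
| sb_step: "sb_rel n u v \<Longrightarrow> sb_eq n (a @ u @ b) (a @ v @ b)"

definition Pi_word :: "nat \<Rightarrow> word" where
  "Pi_word t = map Sig [1..<t+1]"

text \<open>Garside's fundamental word Delta = Pi_{n-1} Pi_{n-2} ... Pi_1\<close>
definition Delta :: "nat \<Rightarrow> word" where
  "Delta n = concat (map (\<lambda>k. Pi_word (n - 1 - k)) [0..<n-1])"

fun R_letter :: "nat \<Rightarrow> letter \<Rightarrow> letter" where
  "R_letter n (Sig i) = Sig (n - i)"
| "R_letter n (X i) = X (n - i)"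

end

theory Submission
  imports Defs
begin

lemma sb_cong: "sb_eq n u v \<Longrightarrow> sb_eq n (p @ u @ q) (p @ v @ q)"
proof (induction rule: sb_eq.induct)
  case (sb_refl w) then show ?case by (rule sb_eq.sb_refl)
next
  case (sb_sym u v) then show ?case by (metis sb_eq.sb_sym)
next
  case (sb_trans u v w) then show ?case by (metis sb_eq.sb_trans)
next
  case (sb_step u v a b)
  have "sb_eq n ((p @ a) @ u @ (b @ q)) ((p @ a) @ v @ (b @ q))"
    using sb_step by (rule sb_eq.sb_step)
  then show ?case by simp
qed

lemma sb_rel_eq: "sb_rel n u v \<Longrightarrow> sb_eq n u v"
  using sb_eq.sb_step[of n u v "[]" "[]"] by simp

lemma upt_split: "i \<le> j \<Longrightarrow> j \<le> k \<Longrightarrow> [i..<k] = [i..<j] @ [j..<k]"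
  by (metis le_add_diff_inverse upt_add_eq_append)

lemma commute:
  assumes mk: "mk = Sig \<or> mk = X" and j0: "1 \<le> j0" "j0 \<le> n - 1"
  and w: "\<forall>l\<in>set w. \<exists>j. l = Sig j \<and> 1 \<le> j \<and> j \<le> n - 1 \<and> (j + 1 < j0 \<or> j0 + 1 < j)"
  shows "sb_eq n (mk j0 # w) (w @ [mk j0])"
  using w
proof (induction w)
  case Nil then show ?case by (simp add: sb_refl)
next
  case (Cons l w)
  then obtain j where l: "l = Sig j" "1 \<le> j" "j \<le> n - 1" "j + 1 < j0 \<or> j0 + 1 < j" by auto
  have r: "sb_rel n [mk j0, Sig j] [Sig j, mk j0]"
    using mk proof
    assume "mk = Sig" then show ?thesis using l j0 by (auto intro: sb_rel.ss_comm)
  next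
    assume "mk = X" then show ?thesis using l j0 by (auto intro: sb_rel.xs_comm)
  qed
  have 1: "sb_eq n (mk j0 # l # w) (l # mk j0 # w)"
    using sb_eq.sb_step[OF r, of "[]" w] l by simp
  have "sb_eq n (l # mk j0 # w) (l # w @ [mk j0])"
    using sb_cong[OF Cons.IH, of "[l]" "[]"] Cons.prems by simp
  then show ?case using 1 by (metis sb_trans append_Cons)
qed

definition Lam :: "nat \<Rightarrow> word" where "Lam m = map Sig (rev [1..<m+1])"

lemma Delta_Suc: "Delta (Suc m) = Pi_word m @ Delta m"
proof (cases m)
  case 0 then show ?thesis by (simp add: Delta_def Pi_word_def)
next
  case (Suc k)
  have "[0..<Suc m - 1] = 0 # map Suc [0..<m-1]"
    using Suc by (simp add: map_Suc_upt upt_conv_Cons)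
  then show ?thesis unfolding Delta_def by (simp add: comp_def)
qed

lemma Delta_set: "l \<in> set (Delta m) \<Longrightarrow> \<exists>j. l = Sig j \<and> 1 \<le> j \<and> j + 1 \<le> m"
  unfolding Delta_def Pi_word_def by auto

lemma Pi_Suc: "Pi_word (Suc m) = Pi_word m @ [Sig (Suc m)]"
  by (simp add: Pi_word_def)

lemma Lam_Suc: "Lam (Suc m) = Sig (Suc m) # Lam m"
  by (simp add: Lam_def)

lemma lemL: "1 \<le> m \<Longrightarrow> m + 1 \<le> n \<Longrightarrow> sb_eq n (Delta (m+1)) (Delta m @ Lam m)"
proof (induction m rule: nat_induct_at_least)
  case base then show ?case by (simp add: Delta_def Pi_word_def Lam_def sb_refl)
next
  case (Suc m)
  have IH: "sb_eq n (Delta (m+1)) (Delta m @ Lam m)" using Suc by simp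
  have e1: "Delta (Suc m + 1) = Pi_word m @ [Sig (Suc m)] @ Delta (m+1)"
    by (simp add: Delta_Suc Pi_Suc)
  have s1: "sb_eq n (Pi_word m @ [Sig (Suc m)] @ Delta (m+1)) (Pi_word m @ [Sig (Suc m)] @ (Delta m @ Lam m))"
    using sb_cong[OF IH, of "Pi_word m @ [Sig (Suc m)]" "[]"] by simp
  have c: "sb_eq n (Sig (Suc m) # Delta m) (Delta m @ [Sig (Suc m)])"
    apply (rule commute) using Suc.prems by (auto dest!: Delta_set)
  have s2: "sb_eq n (Pi_word m @ [Sig (Suc m)] @ (Delta m @ Lam m)) (Pi_word m @ (Delta m @ [Sig (Suc m)]) @ Lam m)"
    using sb_cong[OF c, of "Pi_word m" "Lam m"] by simp
  have e2: "Pi_word m @ (Delta m @ [Sig (Suc m)]) @ Lam m = Delta (Suc m) @ Lam (Suc m)"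
    by (simp add: Delta_Suc Lam_Suc)
  show ?case using e1 s1 s2 e2 by (metis sb_trans)
qed

lemma lemA:
  assumes mk: "mk = Sig \<or> mk = X" and k: "2 \<le> k" "k \<le> t" "t \<le> n - 1"
  shows "sb_eq n (mk k # Pi_word t) (Pi_word t @ [mk (k-1)])"
proof -
  define P1 where "P1 = map Sig [1..<k-1]"
  define P2 where "P2 = map Sig [k+1..<t+1]"
  have dec: "Pi_word t = P1 @ [Sig (k-1), Sig k] @ P2"
  proof -
    have "[1..<t+1] = [1..<k-1] @ [k-1..<t+1]" using k by (intro upt_split) auto
    moreover have "[k-1..<t+1] = (k-1) # k # [k+1..<t+1]" using k
      by (metis Suc_diff_le Suc_le_lessD add_leD2 diff_Suc_1 le_add_diff_inverse2 less_Suc_eq_le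
          one_add_one order_less_le_trans plus_1_eq_Suc upt_conv_Cons add_le_mono1 add_2_eq_Suc')
    ultimately show ?thesis unfolding Pi_word_def P1_def P2_def by simp
  qed
  have c1: "sb_eq n (mk k # P1) (P1 @ [mk k])"
    apply (rule commute[OF mk]) using k unfolding P1_def by auto
  have r: "sb_eq n ([mk k, Sig (k-1), Sig k]) ([Sig (k-1), Sig k, mk (k-1)])"
    using mk proof
    assume "mk = Sig"
    moreover have "sb_rel n [Sig (k-1), Sig k, Sig (k-1)] [Sig k, Sig (k-1), Sig k]"
      using sb_rel.braid[of "k-1" n] k by auto
    ultimately show ?thesis by (simp add: sb_sym sb_rel_eq)
  next
    assume "mk = X"
    moreover have "sb_rel n [Sig (k-1), Sig k, X (k-1)] [X k, Sig (k-1), Sig k]"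
      using sb_rel.mix1[of "k-1" n] k by auto
    ultimately show ?thesis by (simp add: sb_sym sb_rel_eq)
  qed
  have c2: "sb_eq n (mk (k-1) # P2) (P2 @ [mk (k-1)])"
    apply (rule commute[OF mk]) using k unfolding P2_def by auto
  have s1: "sb_eq n (mk k # P1 @ [Sig (k-1), Sig k] @ P2) (P1 @ [mk k, Sig (k-1), Sig k] @ P2)"
    using sb_cong[OF c1, of "[]" "[Sig (k-1), Sig k] @ P2"] by simp
  have s2: "sb_eq n (P1 @ [mk k, Sig (k-1), Sig k] @ P2) (P1 @ [Sig (k-1), Sig k, mk (k-1)] @ P2)"
    using sb_cong[OF r] by simp
  have s3: "sb_eq n (P1 @ [Sig (k-1), Sig k, mk (k-1)] @ P2) (P1 @ [Sig (k-1), Sig k] @ P2 @ [mk (k-1)])"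
    using sb_cong[OF c2, of "P1 @ [Sig (k-1), Sig k]" "[]"] by simp
  show ?thesis using s1 s2 s3 dec by (metis sb_trans append_Cons append_assoc)
qed

lemma lemLam:
  assumes mk: "mk = Sig \<or> mk = X" and k: "1 \<le> k" "k + 1 \<le> m" "m \<le> n - 1"
  shows "sb_eq n (mk k # Lam m) (Lam m @ [mk (k+1)])"
proof -
  define P1 where "P1 = map Sig (rev [k+2..<m+1])"
  define P2 where "P2 = map Sig (rev [1..<k])"
  have dec: "Lam m = P1 @ [Sig (k+1), Sig k] @ P2"
  proof -
    have "[1..<m+1] = [1..<k] @ [k..<m+1]" using k by (intro upt_split) auto
    moreover have "[k..<m+1] = k # (k+1) # [k+2..<m+1]" using k
      by (simp add: upt_conv_Cons)
    ultimately show ?thesis unfolding Lam_def P1_def P2_def by simp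
  qed
  have c1: "sb_eq n (mk k # P1) (P1 @ [mk k])"
    apply (rule commute[OF mk]) using k unfolding P1_def by auto
  have r: "sb_eq n ([mk k, Sig (k+1), Sig k]) ([Sig (k+1), Sig k, mk (k+1)])"
    using mk proof
    assume "mk = Sig" then show ?thesis
      using sb_rel.braid[of k n] k by (auto intro!: sb_rel_eq)
  next
    assume "mk = X"
    moreover have "sb_rel n [Sig (k+1), Sig k, X (k+1)] [X k, Sig (k+1), Sig k]"
      using sb_rel.mix2[of k n] k by auto
    ultimately show ?thesis by (simp add: sb_sym sb_rel_eq)
  qed
  have c2: "sb_eq n (mk (k+1) # P2) (P2 @ [mk (k+1)])"
    apply (rule commute[OF mk]) using k unfolding P2_def by auto
  have s1: "sb_eq n (mk k # P1 @ [Sig (k+1), Sig k] @ P2) (P1 @ [mk k, Sig (k+1), Sig k] @ P2)"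
    using sb_cong[OF c1, of "[]" "[Sig (k+1), Sig k] @ P2"] by simp
  have s2: "sb_eq n (P1 @ [mk k, Sig (k+1), Sig k] @ P2) (P1 @ [Sig (k+1), Sig k, mk (k+1)] @ P2)"
    using sb_cong[OF r] by simp
  have s3: "sb_eq n (P1 @ [Sig (k+1), Sig k, mk (k+1)] @ P2) (P1 @ [Sig (k+1), Sig k] @ P2 @ [mk (k+1)])"
    using sb_cong[OF c2, of "P1 @ [Sig (k+1), Sig k]" "[]"] by simp
  show ?thesis using s1 s2 s3 dec by (metis sb_trans append_Cons append_assoc)
qed

lemma main:
  assumes mk: "mk = Sig \<or> mk = X"
  shows "1 \<le> m \<Longrightarrow> m \<le> n \<Longrightarrow> \<forall>i. 1 \<le> i \<and> i + 1 \<le> m \<longrightarrow> sb_eq n (mk i # Delta m) (Delta m @ [mk (m - i)])"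
proof (induction m rule: nat_induct_at_least)
  case base then show ?case by simp
next
  case (Suc m)
  have IH: "\<forall>i. 1 \<le> i \<and> i + 1 \<le> m \<longrightarrow> sb_eq n (mk i # Delta m) (Delta m @ [mk (m - i)])"
    using Suc by simp
  show ?case
  proof (intro allI impI)
    fix i assume i: "1 \<le> i \<and> i + 1 \<le> Suc m"
    show "sb_eq n (mk i # Delta (Suc m)) (Delta (Suc m) @ [mk (Suc m - i)])"
    proof (cases "i \<ge> 2")
      case True
      have a: "sb_eq n (mk i # Pi_word m) (Pi_word m @ [mk (i-1)])"
        using lemA[OF mk, of i m n] True i Suc.prems by simp
      have b: "sb_eq n (mk (i-1) # Delta m) (Delta m @ [mk (Suc m - i)])"
        using IH[rule_format, of "i-1"] True i by simp
      have s1: "sb_eq n (mk i # Pi_word m @ Delta m) (Pi_word m @ [mk (i-1)] @ Delta m)"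
        using sb_cong[OF a, of "[]" "Delta m"] by simp
      have s2: "sb_eq n (Pi_word m @ [mk (i-1)] @ Delta m) (Pi_word m @ Delta m @ [mk (Suc m - i)])"
        using sb_cong[OF b, of "Pi_word m" "[]"] by simp
      show ?thesis using s1 s2 by (metis sb_trans Delta_Suc append_assoc)
    next
      case False
      then have i1: "i = 1" using i by simp
      show ?thesis
      proof (cases "m = 1")
        case True
        have "sb_eq n [mk 1, Sig 1] [Sig 1, mk 1]"
          using mk proof
          assume "mk = Sig" then show ?thesis by (simp add: sb_refl)
        next
          assume "mk = X" then show ?thesis
            using sb_rel.xs_comm[of 1 n 1] Suc.prems True by (auto intro!: sb_rel_eq)
        qed
        then show ?thesis using True i1 by (simp add: Delta_def Pi_word_def)
      next
        case False
        then have m2: "m \<ge> 2" using Suc by simp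
        have L: "sb_eq n (Delta (Suc m)) (Delta m @ Lam m)" using lemL[of m n] Suc by simp
        have b: "sb_eq n (mk 1 # Delta m) (Delta m @ [mk (m - 1)])"
          using IH[rule_format, of 1] m2 by simp
        have c: "sb_eq n (mk (m-1) # Lam m) (Lam m @ [mk m])"
          using lemLam[OF mk, of "m-1" m n] m2 Suc.prems by simp
        have s0: "sb_eq n (mk 1 # Delta (Suc m)) (mk 1 # Delta m @ Lam m)"
          using sb_cong[OF L, of "[mk 1]" "[]"] by simp
        have s1: "sb_eq n (mk 1 # Delta m @ Lam m) (Delta m @ [mk (m-1)] @ Lam m)"
          using sb_cong[OF b, of "[]" "Lam m"] by simp
        have s2: "sb_eq n (Delta m @ [mk (m-1)] @ Lam m) (Delta m @ Lam m @ [mk m])"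
          using sb_cong[OF c, of "Delta m" "[]"] by simp
        have s3: "sb_eq n (Delta m @ Lam m @ [mk m]) (Delta (Suc m) @ [mk m])"
          using sb_cong[OF sb_sym[OF L], of "[]" "[mk m]"] by simp
        show ?thesis using s0 s1 s2 s3 i1 by (metis sb_trans diff_Suc_1 append_Cons)
      qed
    qed
  qed
qed

theorem proposition2p3:
  fixes n i :: nat
  assumes "n \<ge> 2" and "1 \<le> i" and "i \<le> n - 1"
  shows "sb_eq n (Sig i # Delta n) (Delta n @ [R_letter n (Sig i)])
       \<and> sb_eq n (X i # Delta n) (Delta n @ [R_letter n (X i)])"
  using main[of Sig n n] main[of X n n] assms by auto

end
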